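(* For every bounded measurable $G:[0,a^*]\to[0,\infty[$ with $G\ge4\pi$ a.e. and every $\beta>0$, $\kappa_1(G,\beta)<\beta$.
   Context: $\kappa_1(G,\beta):=\inf_{f\in\mathcal F_G\setminus\{0\}}\frac{\int_0^{a^*}\left(aG(a)|f'(a)|^2+\frac{\beta^2a}{G(a)}|f(a)|^2\right)da}{\int_0^{a^*}|f(a)|^2da}$, where $\mathcal F_G$ is the set of $f\in L^2(]0,a^*[)$ whose distributional derivative satisfies $\int_0^{a^*}|f'|^2aG\,da<\infty$. *)

theory Defs
  imports "HOL-Analysis.Analysis"
begin

definition test_fun :: "real \<Rightarrow> (real \<Rightarrow> real) \<Rightarrow> bool" where
  "test_fun A \<phi> \<longleftrightarrow>
     (\<forall>n x. ((deriv ^^ n) \<phi>) differentiable (at x)) \<and>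
     (\<exists>c d. 0 < c \<and> c \<le> d \<and> d < A \<and> (\<forall>x. x \<notin> {c..d} \<longrightarrow> \<phi> x = 0))"

definition has_weak_deriv :: "real \<Rightarrow> (real \<Rightarrow> complex) \<Rightarrow> (real \<Rightarrow> complex) \<Rightarrow> bool" where
  "has_weak_deriv A f g \<longleftrightarrow>
     (\<forall>c d. 0 < c \<longrightarrow> d < A \<longrightarrow> set_integrable lborel {c..d} g) \<and>
     (\<forall>\<phi>. test_fun A \<phi> \<longrightarrow>
        (LINT x:{0<..<A}|lborel. f x * complex_of_real (deriv \<phi> x))
          = - (LINT x:{0<..<A}|lborel. g x * complex_of_real (\<phi> x)))"

definition FG :: "real \<Rightarrow> (real \<Rightarrow> real) \<Rightarrow> ((real \<Rightarrow> complex) \<times> (real \<Rightarrow> complex)) set" where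
  "FG A G = {(f, g).
      set_borel_measurable lborel {0<..<A} f \<and>
      set_integrable lborel {0<..<A} (\<lambda>x. (cmod (f x))\<^sup>2) \<and>
      has_weak_deriv A f g \<and>
      set_integrable lborel {0<..<A} (\<lambda>x. (cmod (g x))\<^sup>2 * x * G x)}"

definition kappa1 :: "real \<Rightarrow> (real \<Rightarrow> real) \<Rightarrow> real \<Rightarrow> real" where
  "kappa1 A G \<beta> = Inf {
      (LINT x:{0<..<A}|lborel. x * G x * (cmod (g x))\<^sup>2 + \<beta>\<^sup>2 * x / G x * (cmod (f x))\<^sup>2)
        / (LINT x:{0<..<A}|lborel. (cmod (f x))\<^sup>2)
      | f g. (f, g) \<in> FG A G \<and> (LINT x:{0<..<A}|lborel. (cmod (f x))\<^sup>2) \<noteq> 0}"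

end

theory Submission
  imports Defs
begin

lemma meas_ind_le: "(\<lambda>(s::real,t::real). indicator {0..s} t :: real) \<in> borel_measurable (lborel \<Otimes>\<^sub>M lborel)"
  unfolding indicator_def by (simp add: case_prod_beta) measurable

lemma meas_ind_less: "(\<lambda>(s::real,t::real). indicator {0..<t} s :: real) \<in> borel_measurable (lborel \<Otimes>\<^sub>M lborel)"
  unfolding indicator_def by (simp add: case_prod_beta) measurable

lemma box_sets: "{0..x} \<times> {0..x::real} \<in> sets (lborel \<Otimes>\<^sub>M lborel)"
  by (rule pair_measureI) auto

lemma box_fin: "emeasure (lborel \<Otimes>\<^sub>M lborel) ({0..x} \<times> {0..x::real}) < \<infinity>"
  by (subst lborel.emeasure_pair_measure_Times) (auto simp: ennreal_mult_less_top emeasure_lborel_Icc_eq)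

lemma lint_Ico_Icc:
  fixes p :: "real \<Rightarrow> real"
  assumes [measurable]: "p \<in> borel_measurable lborel"
  shows "(LINT s:{0..<t}|lborel. p s) = (LINT s:{0..t}|lborel. p s)"
  unfolding set_lebesgue_integral_def
  by (rule integral_cong_AE) (auto intro!: eventually_mono[OF AE_lborel_singleton[of t]] split: split_indicator)

lemma ibp:
  fixes p q :: "real \<Rightarrow> real"
  assumes pm[measurable]: "p \<in> borel_measurable lborel" and qm[measurable]: "q \<in> borel_measurable lborel"
    and pb: "\<And>s. \<bar>p s\<bar> \<le> B" and qb: "\<And>s. \<bar>q s\<bar> \<le> B"
  shows "(LINT s:{0..x}|lborel. p s * (LINT t:{0..s}|lborel. q t))
       + (LINT t:{0..x}|lborel. q t * (LINT s:{0..t}|lborel. p s))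
       = (LINT s:{0..x}|lborel. p s) * (LINT t:{0..x}|lborel. q t)"
proof -
  define K1 where "K1 = (\<lambda>(s,t). indicator {0..x} s * p s * (indicator {0..s} t * q t) :: real)"
  define K2 where "K2 = (\<lambda>(s,t). indicator {0..x} t * q t * (indicator {0..<t} s * p s) :: real)"
  define K where "K = (\<lambda>(s,t). indicator {0..x} s * p s * (indicator {0..x} t * q t) :: real)"
  have m1[measurable]: "K1 \<in> borel_measurable (lborel \<Otimes>\<^sub>M lborel)"
    using meas_ind_le unfolding K1_def case_prod_beta by measurable
  have m2[measurable]: "K2 \<in> borel_measurable (lborel \<Otimes>\<^sub>M lborel)"
    using meas_ind_less unfolding K2_def case_prod_beta by measurable
  have m[measurable]: "K \<in> borel_measurable (lborel \<Otimes>\<^sub>M lborel)"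
    unfolding K_def case_prod_beta by measurable
  have BB: "\<bar>p s * q t\<bar> \<le> B * B" for s t
    using pb[of s] qb[of t] by (simp add: abs_mult mult_mono')
  have ab: "\<bar>(indicator A a :: real) * y\<bar> \<le> \<bar>y\<bar>" for A a y
    by (simp add: indicator_def)
  have b1: "\<bar>K1 z\<bar> \<le> B * B" for z
  proof -
    obtain s t where z: "z = (s,t)" by (cases z)
    have "\<bar>K1 z\<bar> = \<bar>indicator {0..x} s * (indicator {0..s} t * (p s * q t))\<bar>"
      unfolding z K1_def by (simp add: mult_ac)
    also have "\<dots> \<le> \<bar>p s * q t\<bar>" by (meson ab order_trans)
    finally show ?thesis using BB[of s t] by linarith
  qed
  have b2: "\<bar>K2 z\<bar> \<le> B * B" for z
  proof -
    obtain s t where z: "z = (s,t)" by (cases z)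
    have "\<bar>K2 z\<bar> = \<bar>indicator {0..x} t * (indicator {0..<t} s * (p s * q t))\<bar>"
      unfolding z K2_def by (simp add: mult_ac)
    also have "\<dots> \<le> \<bar>p s * q t\<bar>" by (meson ab order_trans)
    finally show ?thesis using BB[of s t] by linarith
  qed
  have b: "\<bar>K z\<bar> \<le> B * B" for z
  proof -
    obtain s t where z: "z = (s,t)" by (cases z)
    have "\<bar>K z\<bar> = \<bar>indicator {0..x} s * (indicator {0..x} t * (p s * q t))\<bar>"
      unfolding z K_def by (simp add: mult_ac)
    also have "\<dots> \<le> \<bar>p s * q t\<bar>" by (meson ab order_trans)
    finally show ?thesis using BB[of s t] by linarith
  qed
  have n1: "z \<notin> {0..x} \<times> {0..x} \<Longrightarrow> K1 z = 0" for z
    by (cases z) (auto simp: K1_def indicator_def)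
  have n2: "z \<notin> {0..x} \<times> {0..x} \<Longrightarrow> K2 z = 0" for z
    by (cases z) (auto simp: K2_def indicator_def)
  have n: "z \<notin> {0..x} \<times> {0..x} \<Longrightarrow> K z = 0" for z
    by (cases z) (auto simp: K_def indicator_def)
  have i1: "integrable (lborel \<Otimes>\<^sub>M lborel) K1"
    by (rule integrableI_bounded_set[OF box_sets[of x] m1 box_fin[of x], where B="B*B"])
       (use b1 n1 in auto)
  have i2: "integrable (lborel \<Otimes>\<^sub>M lborel) K2"
    by (rule integrableI_bounded_set[OF box_sets[of x] m2 box_fin[of x], where B="B*B"])
       (use b2 n2 in auto)
  have i: "integrable (lborel \<Otimes>\<^sub>M lborel) K"
    by (rule integrableI_bounded_set[OF box_sets[of x] m box_fin[of x], where B="B*B"])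
       (use b n in auto)
  have KK: "K = (\<lambda>z. K1 z + K2 z)"
    by (auto simp: K_def K1_def K2_def fun_eq_iff split: split_indicator)
  have "integral\<^sup>L (lborel \<Otimes>\<^sub>M lborel) K = integral\<^sup>L (lborel \<Otimes>\<^sub>M lborel) K1 + integral\<^sup>L (lborel \<Otimes>\<^sub>M lborel) K2"
    unfolding KK using i1 i2 by simp
  moreover have "integral\<^sup>L (lborel \<Otimes>\<^sub>M lborel) K1 = (LINT s:{0..x}|lborel. p s * (LINT t:{0..s}|lborel. q t))"
  proof -
    have "integral\<^sup>L (lborel \<Otimes>\<^sub>M lborel) K1 = (\<integral>s. (\<integral>t. K1 (s,t) \<partial>lborel) \<partial>lborel)"
      using lborel_pair.integral_fst'[OF i1] by simp
    also have "\<dots> = (LINT s:{0..x}|lborel. p s * (LINT t:{0..s}|lborel. q t))"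
      unfolding set_lebesgue_integral_def K1_def by (simp add: mult.assoc)
    finally show ?thesis .
  qed
  moreover have "integral\<^sup>L (lborel \<Otimes>\<^sub>M lborel) K2 = (LINT t:{0..x}|lborel. q t * (LINT s:{0..t}|lborel. p s))"
  proof -
    have "integral\<^sup>L (lborel \<Otimes>\<^sub>M lborel) K2 = (\<integral>t. (\<integral>s. K2 (s,t) \<partial>lborel) \<partial>lborel)"
      using lborel_pair.integral_snd[of "\<lambda>s t. K2 (s,t)"] i2 by simp
    also have "\<dots> = (LINT t:{0..x}|lborel. q t * (LINT s:{0..<t}|lborel. p s))"
      unfolding set_lebesgue_integral_def K2_def by (simp add: mult.assoc)
    also have "\<dots> = (LINT t:{0..x}|lborel. q t * (LINT s:{0..t}|lborel. p s))"
      by (simp add: lint_Ico_Icc)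
    finally show ?thesis .
  qed
  moreover have "integral\<^sup>L (lborel \<Otimes>\<^sub>M lborel) K = (LINT s:{0..x}|lborel. p s) * (LINT t:{0..x}|lborel. q t)"
  proof -
    have "integral\<^sup>L (lborel \<Otimes>\<^sub>M lborel) K = (\<integral>s. (\<integral>t. K (s,t) \<partial>lborel) \<partial>lborel)"
      using lborel_pair.integral_fst'[OF i] by simp
    also have "\<dots> = (LINT s:{0..x}|lborel. p s) * (LINT t:{0..x}|lborel. q t)"
      unfolding set_lebesgue_integral_def K_def
      by (simp only: case_prod_conv integral_mult_right_zero integral_mult_left_zero real_scaleR_def)
    finally show ?thesis .
  qed
  ultimately show ?thesis by simp
qed

lemma si_bnd:
  fixes h :: "real \<Rightarrow> 'b::{banach, second_countable_topology}"
  assumes "h \<in> borel_measurable lborel" "\<And>x. x \<in> S \<Longrightarrow> norm (h x) \<le> B"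
    "S \<in> sets lborel" "emeasure lborel S < \<infinity>"
  shows "set_integrable lborel S h"
  unfolding set_integrable_def
  by (rule integrableI_bounded_set_indicator[where B=B]) (use assms in auto)

lemma si_Icc:
  fixes h :: "real \<Rightarrow> 'b::{banach, second_countable_topology}"
  assumes "h \<in> borel_measurable lborel" "\<And>x. x \<in> {a..c} \<Longrightarrow> norm (h x) \<le> B"
  shows "set_integrable lborel {a..c} h"
  by (rule si_bnd[OF assms]) (auto simp: emeasure_lborel_Icc_eq)

lemma si_Ioo:
  fixes h :: "real \<Rightarrow> 'b::{banach, second_countable_topology}"
  assumes "h \<in> borel_measurable lborel" "\<And>x. x \<in> {a<..<c} \<Longrightarrow> norm (h x) \<le> B"
  shows "set_integrable lborel {a<..<c} h"
proof -
  have "emeasure lborel {a<..<c} \<le> emeasure lborel {a..c}" by (rule emeasure_mono) auto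
  also have "\<dots> < \<infinity>" by (simp add: emeasure_lborel_Icc_eq)
  finally have fin: "emeasure lborel {a<..<c} < \<infinity>" .
  show ?thesis by (rule si_bnd[OF assms(1,2) _ fin]) auto
qed

context
  fixes u :: "real \<Rightarrow> real" and A b :: real
  assumes um[measurable]: "u \<in> borel_measurable lborel" and u0: "\<And>x. 0 \<le> u x"
    and ub: "\<And>x. u x \<le> b" and uz: "\<And>x. x \<notin> {0..A} \<Longrightarrow> u x = 0" and A0: "0 \<le> A"
begin

definition "FF x = (LINT t:{0..x}|lborel. u t)"

lemma b0: "0 \<le> b" using u0[of 0] ub[of 0] by linarith

lemma u_int: "set_integrable lborel {a..c} u"
  by (rule si_Icc[where B=b]) (use u0 ub in auto)

lemma FF_nonneg: "0 \<le> FF x"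
  unfolding FF_def set_lebesgue_integral_def
  by (rule integral_nonneg_AE) (auto intro!: AE_I2 simp: u0)

lemma FF_mono_le: assumes "x \<le> y" shows "FF x \<le> FF y"
  unfolding FF_def set_lebesgue_integral_def
  apply (rule integral_mono)
  using u_int[of 0 x] u_int[of 0 y] assms u0 by (auto simp: set_integrable_def split: split_indicator)

lemma FF_le: "FF x \<le> b * A"
proof -
  have "FF x = (LINT t|lborel. indicator {0..x} t * u t)" unfolding FF_def set_lebesgue_integral_def by simp
  also have "\<dots> \<le> (LINT t|lborel. indicator {0..A} t * b)"
  proof (rule integral_mono)
    show "integrable lborel (\<lambda>t. indicator {0..A} t * b)"
      using si_Icc[of "\<lambda>_. b" 0 A b] b0 by (auto simp: set_integrable_def)
    show "integrable lborel (\<lambda>t. indicator {0..x} t * u t)"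
      using u_int[of 0 x] by (auto simp: set_integrable_def)
    show "indicator {0..x} t * u t \<le> indicator {0..A} t * b" for t
      using uz[of t] u0[of t] ub[of t] b0 by (auto split: split_indicator)
  qed
  also have "\<dots> = b * A"
    using set_integral_const[of "{0..A}" lborel b] A0 unfolding set_lebesgue_integral_def
    by (simp add: emeasure_lborel_Icc_eq)
  finally show ?thesis .
qed

lemma FF_meas[measurable]: "FF \<in> borel_measurable lborel"
proof -
  have "mono FF" by (simp add: FF_mono_le monoI)
  then show ?thesis using borel_measurable_mono by simp
qed

lemma FF_pow: "(LINT t:{0..x}|lborel. u t * FF t ^ n) = FF x ^ Suc n / Suc n"
proof (induction n arbitrary: x)
  case 0
  then show ?case by (simp add: FF_def)
next
  case (Suc n)
  define q where "q t = real (Suc n) * (u t * FF t ^ n)" for t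
  have Q: "(LINT t:{0..s}|lborel. q t) = FF s ^ Suc n" for s
    unfolding q_def using Suc.IH[of s] by simp
  have qm[measurable]: "q \<in> borel_measurable lborel" unfolding q_def by measurable
  define B where "B = b + real (Suc n) * (b * (b*A)^n)"
  have qb: "\<bar>q t\<bar> \<le> B" for t
  proof -
    have "\<bar>q t\<bar> = real (Suc n) * (u t * FF t ^ n)" unfolding q_def using u0 FF_nonneg by simp
    also have "\<dots> \<le> real (Suc n) * (b * (b*A)^n)"
      by (intro mult_left_mono mult_mono power_mono) (use u0 ub FF_nonneg FF_le b0 in auto)
    finally show ?thesis unfolding B_def using b0 by linarith
  qed
  have ub': "\<bar>u t\<bar> \<le> B" for t
  proof -
    have "0 \<le> real (Suc n) * (b * (b*A)^n)" using b0 A0 by simp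
    then show ?thesis using u0[of t] ub[of t] unfolding B_def by linarith
  qed
  have "(LINT s:{0..x}|lborel. u s * (LINT t:{0..s}|lborel. q t))
       + (LINT t:{0..x}|lborel. q t * (LINT s:{0..t}|lborel. u s))
       = (LINT s:{0..x}|lborel. u s) * (LINT t:{0..x}|lborel. q t)"
    by (rule ibp[OF um qm ub' qb])
  then have "(LINT s:{0..x}|lborel. u s * FF s ^ Suc n) + (LINT t:{0..x}|lborel. q t * FF t)
       = FF x * FF x ^ Suc n"
    by (simp only: Q FF_def[symmetric])
  moreover have "(LINT t:{0..x}|lborel. q t * FF t) = real (Suc n) * (LINT t:{0..x}|lborel. u t * FF t ^ Suc n)"
  proof -
    have "(\<lambda>t. q t * FF t) = (\<lambda>t. real (Suc n) * (u t * FF t ^ Suc n))"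
      by (auto simp: q_def fun_eq_iff)
    then show ?thesis by (simp only: set_integral_mult_right)
  qed
  ultimately have eq: "(LINT s:{0..x}|lborel. u s * FF s ^ Suc n) + real (Suc n) * (LINT t:{0..x}|lborel. u t * FF t ^ Suc n)
       = FF x * FF x ^ Suc n" by simp
  define I where "I = (LINT s:{0..x}|lborel. u s * FF s ^ Suc n)"
  have "I + real (Suc n) * I = FF x ^ Suc (Suc n)" using eq unfolding I_def by simp
  then have "real (Suc (Suc n)) * I = FF x ^ Suc (Suc n)" by (simp add: algebra_simps)
  then show ?case unfolding I_def[symmetric] by (simp add: field_simps)
qed

lemma FF_pow': "(LINT t:{0..x}|lborel. k * (u t * FF t ^ n)) = k * (FF x ^ Suc n / Suc n)"
  by (simp only: set_integral_mult_right FF_pow)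

lemma FF_exp:
  assumes c: "c \<noteq> 0"
  shows "(LINT t:{0..x}|lborel. u t * exp (- c * FF t)) = (1 - exp (- c * FF x)) / c"
proof -
  define fi where "fi n t = indicator {0..x} t * (((-c)^n / fact n) * (u t * FF t ^ n))" for n t
  have fim[measurable]: "fi n \<in> borel_measurable lborel" for n unfolding fi_def by measurable
  have nfi: "norm (fi n t) = indicator {0..x} t * ((\<bar>c\<bar>^n / fact n) * (u t * FF t ^ n))" for n t
    unfolding fi_def using u0[of t] FF_nonneg[of t]
    by (simp add: abs_mult power_abs split: split_indicator)
  have fib: "norm (fi n t) \<le> b * ((\<bar>c\<bar> * (b * A))^n / fact n)" for n t
  proof -
    have "norm (fi n t) \<le> (\<bar>c\<bar>^n / fact n) * (u t * FF t ^ n)"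
      unfolding nfi using u0[of t] FF_nonneg[of t] by (simp split: split_indicator)
    also have "\<dots> \<le> (\<bar>c\<bar>^n / fact n) * (b * (b*A) ^ n)"
      by (intro mult_left_mono mult_mono power_mono) (use u0 ub FF_nonneg FF_le b0 in auto)
    finally show ?thesis by (simp add: power_mult_distrib field_simps)
  qed
  have int: "integrable lborel (fi n)" for n
  proof -
    have "set_integrable lborel {0..x} (\<lambda>t. ((-c)^n / fact n) * (u t * FF t ^ n))"
    proof (rule si_Icc[where B="b * ((\<bar>c\<bar> * (b * A))^n / fact n)"])
      show "(\<lambda>t. ((-c)^n / fact n) * (u t * FF t ^ n)) \<in> borel_measurable lborel" by measurable
      fix t :: real assume "t \<in> {0..x}"
      then show "norm ((-c)^n / fact n * (u t * FF t ^ n)) \<le> b * ((\<bar>c\<bar> * (b * A))^n / fact n)"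
        using fib[of n t] by (simp add: fi_def)
    qed
    then show ?thesis unfolding set_integrable_def fi_def by simp
  qed
  have sumexp: "summable (\<lambda>n. b * ((\<bar>c\<bar> * (b * A))^n / fact n))"
    using summable_exp[of "\<bar>c\<bar> * (b * A)"] by (intro summable_mult) (simp add: divide_inverse mult.commute)
  have summ: "AE t in lborel. summable (\<lambda>n. norm (fi n t))"
    by (intro AE_I2 summable_comparison_test[OF _ sumexp]) (use fib in auto)
  have ifi: "integral\<^sup>L lborel (fi n) = (-c)^n / fact n * (FF x ^ Suc n / Suc n)" for n
    using FF_pow'[where k="(-c)^n / fact n" and x=x and n=n] unfolding fi_def set_lebesgue_integral_def by simp
  have infi: "(\<integral>t. norm (fi n t) \<partial>lborel) = \<bar>c\<bar>^n / fact n * (FF x ^ Suc n / Suc n)" for n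
    using FF_pow'[where k="\<bar>c\<bar>^n / fact n" and x=x and n=n] unfolding nfi set_lebesgue_integral_def by simp
  have infi2: "\<bar>c\<bar>^n / fact n * (FF x ^ Suc n / Suc n) = (1/\<bar>c\<bar>) * ((\<bar>c\<bar> * FF x) ^ Suc n / fact (Suc n))" for n
    using c by (simp add: power_mult_distrib field_simps del: fact_Suc) (simp add: algebra_simps)
  have "summable (\<lambda>n. (\<bar>c\<bar> * FF x) ^ Suc n / fact (Suc n))"
    using summable_exp[of "\<bar>c\<bar> * FF x"] summable_Suc_iff[of "\<lambda>n. inverse (fact n) * (\<bar>c\<bar> * FF x)^n"]
    by (simp add: divide_inverse mult.commute)
  then have sumI: "summable (\<lambda>n. (\<integral>t. norm (fi n t) \<partial>lborel))"
    unfolding infi infi2 by (rule summable_mult)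
  have S: "(\<lambda>n. integral\<^sup>L lborel (fi n)) sums (\<integral>t. (\<Sum>n. fi n t) \<partial>lborel)"
    by (rule sums_integral[OF int summ sumI])
  have pm: "(- (c * y))^n = (-c)^n * y^n" for y :: real and n
    by (metis minus_mult_left power_mult_distrib)
  have pt: "(\<Sum>n. fi n t) = indicator {0..x} t * (u t * exp (- c * FF t))" for t
  proof -
    have "(\<lambda>n. (- c * FF t)^n /\<^sub>R fact n) sums exp (- c * FF t)" by (rule exp_converges)
    then have "(\<lambda>n. (indicator {0..x} t * u t) * ((- c * FF t)^n /\<^sub>R fact n)) sums ((indicator {0..x} t * u t) * exp (- c * FF t))"
      by (rule sums_mult)
    moreover have "(\<lambda>n. (indicator {0..x} t * u t) * ((- c * FF t)^n /\<^sub>R fact n)) = (\<lambda>n. fi n t)"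
      by (auto simp: fi_def fun_eq_iff pm divide_inverse)
    ultimately show ?thesis by (simp add: sums_iff mult.assoc)
  qed
  have L: "(LINT t:{0..x}|lborel. u t * exp (- c * FF t)) = (\<integral>t. (\<Sum>n. fi n t) \<partial>lborel)"
    unfolding set_lebesgue_integral_def pt by simp
  have "(\<lambda>n. (- c * FF x) ^ Suc n / fact (Suc n)) sums (exp (- c * FF x) - 1)"
    using exp_converges[of "- c * FF x"] sums_Suc_iff[of "\<lambda>n. (- c * FF x)^n /\<^sub>R fact n" "exp (- c * FF x) - 1"]
    by (simp add: divide_inverse mult_ac)
  then have "(\<lambda>n. (- c * FF x) ^ Suc n / fact (Suc n) / (-c)) sums ((exp (- c * FF x) - 1) / (-c))"
    by (rule sums_divide)
  moreover have "(\<lambda>n. (- c * FF x) ^ Suc n / fact (Suc n) / (-c)) = (\<lambda>n. integral\<^sup>L lborel (fi n))"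
  proof (rule ext)
    fix n
    have "(- c * FF x) ^ Suc n / fact (Suc n) / (-c) = ((-c) * (-c)^n * (FF x * FF x ^ n)) / (real (Suc n) * fact n) / (-c)"
      by (simp only: power_mult_distrib power_Suc fact_Suc of_nat_mult mult_ac)
    also have "\<dots> = ((-c)^n * (FF x * FF x ^ n)) / (real (Suc n) * fact n)"
      using c by (simp add: mult.assoc)
    also have "\<dots> = (-c)^n / fact n * ((FF x * FF x ^ n) / real (Suc n))"
      by (simp add: times_divide_times_eq mult.commute)
    finally show "(- c * FF x) ^ Suc n / fact (Suc n) / (-c) = integral\<^sup>L lborel (fi n)"
      unfolding ifi by (simp only: power_Suc)
  qed
  moreover have "(exp (- c * FF x) - 1) / (-c) = (1 - exp (- c * FF x)) / c"
    using c by (simp add: field_simps)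
  ultimately have "(\<lambda>n. integral\<^sup>L lborel (fi n)) sums ((1 - exp (- c * FF x)) / c)"
    by (simp only:)
  then show ?thesis using S L sums_unique2 by metis
qed

end


lemma lint_Ioo_Icc:
  fixes h :: "real \<Rightarrow> real"
  assumes [measurable]: "h \<in> borel_measurable lborel"
  shows "(LINT s:{0<..<A}|lborel. h s) = (LINT s:{0..A}|lborel. h s)"
  unfolding set_lebesgue_integral_def
  by (rule integral_cong_AE)
     (auto intro!: eventually_mono[OF eventually_conj[OF AE_lborel_singleton[of 0] AE_lborel_singleton[of A]]]
       split: split_indicator)

lemma weak_deriv_lemma:
  fixes f g :: "real \<Rightarrow> real"
  assumes fm[measurable]: "f \<in> borel_measurable lborel" and gm[measurable]: "g \<in> borel_measurable lborel"
    and fb: "\<And>x. \<bar>f x\<bar> \<le> Bf" and gb: "\<And>x. \<bar>g x\<bar> \<le> Bg" and A0: "0 < A"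
    and FT: "\<And>s. s \<in> {0..A} \<Longrightarrow> (LINT t:{0..s}|lborel. g t) = f s - f 0"
  shows "has_weak_deriv A (\<lambda>x. complex_of_real (f x)) (\<lambda>x. complex_of_real (g x))"
  unfolding has_weak_deriv_def
proof (intro conjI allI impI)
  fix c d :: real
  show "set_integrable lborel {c..d} (\<lambda>x. complex_of_real (g x))"
    by (rule si_Icc[where B=Bg]) (use gb in auto)
next
  fix \<phi> assume tf: "test_fun A \<phi>"
  then obtain c d where cd: "0 < c" "c \<le> d" "d < A" and supp: "\<And>x. x \<notin> {c..d} \<Longrightarrow> \<phi> x = 0"
    unfolding test_fun_def by blast
  have dif: "\<phi> differentiable (at x)" for x
    using tf unfolding test_fun_def by (metis funpow_0)
  have der: "(\<phi> has_real_derivative deriv \<phi> x) (at x)" for x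
    using dif DERIV_deriv_iff_real_differentiable by blast
  have dif1: "deriv \<phi> differentiable (at x)" for x
  proof -
    have "((deriv ^^ Suc 0) \<phi>) differentiable (at x)" using tf unfolding test_fun_def by blast
    then show ?thesis by simp
  qed
  have cont: "continuous_on UNIV (deriv \<phi>)"
    using dif1 by (meson continuous_at_imp_continuous_on differentiable_imp_continuous_within)
  have dm[measurable]: "deriv \<phi> \<in> borel_measurable lborel"
    using borel_measurable_continuous_onI[OF cont] by simp
  have \<phi>m[measurable]: "\<phi> \<in> borel_measurable lborel"
  proof -
    have "continuous_on UNIV \<phi>"
      using der by (meson DERIV_isCont continuous_at_imp_continuous_on)
    then show ?thesis using borel_measurable_continuous_onI by simp
  qed
  have \<phi>0: "\<phi> 0 = 0" and \<phi>A: "\<phi> A = 0" using supp cd by auto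
  obtain B where B: "\<And>x. x \<in> {0..A} \<Longrightarrow> \<bar>deriv \<phi> x\<bar> \<le> B"
  proof -
    have "compact (deriv \<phi> ` {0..A})"
      by (rule compact_continuous_image) (use cont continuous_on_subset in auto)
    then obtain B where "\<forall>y\<in>deriv \<phi> ` {0..A}. norm y \<le> B"
      using compact_imp_bounded bounded_iff by metis
    then have "\<And>x. x \<in> {0..A} \<Longrightarrow> \<bar>deriv \<phi> x\<bar> \<le> B" by auto
    then show ?thesis using that by blast
  qed
  have \<phi>b: "\<exists>B. \<forall>x\<in>{0..A}. \<bar>\<phi> x\<bar> \<le> B"
  proof -
    have "compact (\<phi> ` {0..A})"
      by (rule compact_continuous_image) (auto intro!: continuous_at_imp_continuous_on DERIV_isCont der)
    then obtain B where "\<forall>y\<in>\<phi> ` {0..A}. norm y \<le> B"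
      using compact_imp_bounded bounded_iff by metis
    then show ?thesis by auto
  qed
  then obtain B\<phi> where B\<phi>: "\<And>x. x \<in> {0..A} \<Longrightarrow> \<bar>\<phi> x\<bar> \<le> B\<phi>" by blast
  have B0: "0 \<le> B" using B[of 0] A0 by auto
  define p where "p s = indicator {0..A} s * deriv \<phi> s" for s
  have pm[measurable]: "p \<in> borel_measurable lborel" unfolding p_def by measurable
  have pb: "\<bar>p s\<bar> \<le> max B Bg" for s
    using B[of s] gb[of 0] by (auto simp: p_def indicator_def)
  have gb': "\<bar>g s\<bar> \<le> max B Bg" for s using gb[of s] by auto
  have P: "(LINT t:{0..s}|lborel. p t) = \<phi> s" if "s \<in> {0..A}" for s
  proof -
    have "(LINT t:{0..s}|lborel. p t) = (LINT t:{0..s}|lborel. deriv \<phi> t)"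
      by (rule set_lebesgue_integral_cong) (use that in \<open>auto simp: p_def\<close>)
    also have "\<dots> = \<phi> s - \<phi> 0"
      unfolding set_lebesgue_integral_def
      by (rule integral_FTC_atLeastAtMost)
         (use that der cont in \<open>auto intro: has_field_derivative_at_within continuous_on_subset simp: has_real_derivative_iff_has_vector_derivative[symmetric]\<close>)
    finally show ?thesis using \<phi>0 by simp
  qed
  have I: "(LINT s:{0..A}|lborel. p s * (LINT t:{0..s}|lborel. g t))
       + (LINT t:{0..A}|lborel. g t * (LINT s:{0..t}|lborel. p s))
       = (LINT s:{0..A}|lborel. p s) * (LINT t:{0..A}|lborel. g t)"
    by (rule ibp[OF pm gm pb gb'])
  have e1: "(LINT s:{0..A}|lborel. p s * (LINT t:{0..s}|lborel. g t)) = (LINT s:{0..A}|lborel. deriv \<phi> s * f s - deriv \<phi> s * f 0)"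
    by (rule set_lebesgue_integral_cong) (auto simp: p_def FT algebra_simps)
  have e2: "(LINT t:{0..A}|lborel. g t * (LINT s:{0..t}|lborel. p s)) = (LINT t:{0..A}|lborel. g t * \<phi> t)"
    by (rule set_lebesgue_integral_cong) (auto simp: P)
  have e3: "(LINT s:{0..A}|lborel. p s) = 0" using P[of A] A0 \<phi>A by simp
  have e4: "(LINT s:{0..A}|lborel. deriv \<phi> s) = 0"
  proof -
    have "(LINT s:{0..A}|lborel. p s) = (LINT s:{0..A}|lborel. deriv \<phi> s)"
      by (rule set_lebesgue_integral_cong) (auto simp: p_def)
    then show ?thesis using e3 by simp
  qed
  have i1: "set_integrable lborel {0..A} (\<lambda>s. deriv \<phi> s * f s)"
    by (rule si_Icc[where B="B * Bf"]) (use B B0 fb in \<open>auto simp: abs_mult intro!: mult_mono\<close>)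
  have i2: "set_integrable lborel {0..A} (\<lambda>s. deriv \<phi> s * f 0)"
    by (rule si_Icc[where B="B * Bf"]) (use B B0 fb in \<open>auto simp: abs_mult intro!: mult_mono\<close>)
  have "(LINT s:{0..A}|lborel. deriv \<phi> s * f s - deriv \<phi> s * f 0) = (LINT s:{0..A}|lborel. deriv \<phi> s * f s)"
    using set_integral_diff(2)[OF i1 i2] e4 by simp
  then have R: "(LINT s:{0..A}|lborel. f s * deriv \<phi> s) = - (LINT t:{0..A}|lborel. g t * \<phi> t)"
    using I e1 e2 e3 by (simp add: mult.commute)
  have "(LINT x:{0<..<A}|lborel. complex_of_real (f x) * complex_of_real (deriv \<phi> x))
      = complex_of_real (LINT x:{0<..<A}|lborel. f x * deriv \<phi> x)"
    by (simp only: of_real_mult[symmetric] set_integral_complex_of_real)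
  also have "\<dots> = complex_of_real (- (LINT x:{0<..<A}|lborel. g x * \<phi> x))"
    using R by (simp add: lint_Ioo_Icc)
  also have "\<dots> = - (LINT x:{0<..<A}|lborel. complex_of_real (g x) * complex_of_real (\<phi> x))"
    by (simp only: of_real_mult[symmetric] set_integral_complex_of_real of_real_minus)
  finally show "(LINT x:{0<..<A}|lborel. complex_of_real (f x) * complex_of_real (deriv \<phi> x))
      = - (LINT x:{0<..<A}|lborel. complex_of_real (g x) * complex_of_real (\<phi> x))" .
qed


theorem mainTheorem15:
  fixes A :: real and G :: "real \<Rightarrow> real" and \<beta> :: real
  assumes "0 < A"
    and "set_borel_measurable lborel {0..A} G"
    and "\<exists>M. \<forall>x\<in>{0..A}. G x \<le> M"
    and "\<forall>x\<in>{0..A}. 0 \<le> G x"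
    and "AE x in lborel. x \<in> {0..A} \<longrightarrow> 4 * pi \<le> G x"
    and "0 < \<beta>"
  shows "kappa1 A G \<beta> < \<beta>"
proof -
  have A0: "0 < A" and bet: "0 < \<beta>" using assms by auto
  obtain M where M: "\<And>x. x \<in> {0..A} \<Longrightarrow> G x \<le> M" using assms(3) by blast
  have Gnn: "\<And>x. x \<in> {0..A} \<Longrightarrow> 0 \<le> G x" using assms(4) by blast
  define G' where "G' x = indicator {0..A} x * G x" for x
  have G'm[measurable]: "G' \<in> borel_measurable lborel"
    using assms(2) unfolding set_borel_measurable_def G'_def by simp
  define b :: real where "b = 1 / (4 * pi)"
  have b0: "0 < b" unfolding b_def by simp
  define u where "u x = indicator {0..A} x * (if 4 * pi \<le> G' x then 1 / G' x else b)" for x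
  have um[measurable]: "u \<in> borel_measurable lborel" unfolding u_def by measurable
  have u0: "0 \<le> u x" for x
  proof -
    have "4 * pi \<le> G' x \<Longrightarrow> 0 \<le> 1 / G' x" using pi_gt_zero by (simp add: order_trans[of 0 "4*pi"])
    then show ?thesis unfolding u_def using b0 by (auto simp: indicator_def)
  qed
  have ub: "u x \<le> b" for x
  proof -
    have "4 * pi \<le> G' x \<Longrightarrow> 1 / G' x \<le> b" unfolding b_def
      using pi_gt_zero by (intro divide_left_mono) (auto intro!: mult_pos_pos simp: order_less_le_trans[of 0 "4*pi"])
    then show ?thesis unfolding u_def using b0 by (auto simp: indicator_def)
  qed
  have uz: "x \<notin> {0..A} \<Longrightarrow> u x = 0" for x unfolding u_def by simp
  have A0': "0 \<le> A" using A0 by simp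
  define F where "F = FF u"
  note Fnn = FF_nonneg[OF um u0 ub uz A0', folded F_def]
  note Fm = FF_meas[OF um u0 ub uz A0', folded F_def]
  note Fexp = FF_exp[OF um u0 ub uz A0', folded F_def]
  have F0: "F 0 = 0"
  proof -
    have "F 0 = (LINT t:{0..0}|lborel. u t)" unfolding F_def by (rule FF_def[OF um u0 ub uz A0'])
    also have "\<dots> = (LINT t:{0..<0}|lborel. u t)" using lint_Ico_Icc[OF um, of 0] by simp
    also have "\<dots> = 0" by (simp add: set_lebesgue_integral_def)
    finally show ?thesis .
  qed
  define f where "f x = exp (- \<beta> * F x)" for x
  define g where "g x = - \<beta> * u x * f x" for x
  have fm[measurable]: "f \<in> borel_measurable lborel" unfolding f_def using Fm by measurable
  have gm[measurable]: "g \<in> borel_measurable lborel" unfolding g_def by measurable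
  have fpos: "0 < f x" for x unfolding f_def by simp
  have fle1: "f x \<le> 1" for x unfolding f_def using Fnn[of x] bet by simp
  have fb: "\<bar>f x\<bar> \<le> 1" for x using fpos[of x] fle1[of x] by simp
  have gb: "\<bar>g x\<bar> \<le> \<beta> * b" for x
  proof -
    have "\<bar>g x\<bar> = \<beta> * (u x * f x)" unfolding g_def using bet u0[of x] fpos[of x] by (simp add: abs_mult)
    also have "\<dots> \<le> \<beta> * (b * 1)"
      using bet u0[of x] ub[of x] fpos[of x] fle1[of x] by (intro mult_left_mono mult_mono) auto
    finally show ?thesis by simp
  qed
  have E1: "(LINT t:{0..s}|lborel. u t * f t) = (1 - f s) / \<beta>" for s
    unfolding f_def using Fexp[of \<beta> s] bet by simp
  have E2: "(LINT t:{0..s}|lborel. u t * (f t)\<^sup>2) = (1 - (f s)\<^sup>2) / (2 * \<beta>)" for s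
  proof -
    have sq: "(f t)\<^sup>2 = exp (- (2 * \<beta>) * F t)" for t
      unfolding f_def by (simp add: power2_eq_square exp_add[symmetric])
    show ?thesis unfolding sq using Fexp[of "2 * \<beta>" s] bet by simp
  qed
  have FT: "(LINT t:{0..s}|lborel. g t) = f s - f 0" for s
  proof -
    have "(LINT t:{0..s}|lborel. g t) = - \<beta> * (LINT t:{0..s}|lborel. u t * f t)"
      unfolding g_def by (simp only: mult.assoc set_integral_mult_right)
    then show ?thesis using E1[of s] bet by (simp add: f_def F0 field_simps)
  qed
  have wd: "has_weak_deriv A (\<lambda>x. complex_of_real (f x)) (\<lambda>x. complex_of_real (g x))"
    by (rule weak_deriv_lemma[OF fm gm fb gb A0 FT])
  define fc where "fc x = complex_of_real (f x)" for x
  define gc where "gc x = complex_of_real (g x)" for x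
  have cf: "(cmod (fc x))\<^sup>2 = (f x)\<^sup>2" for x unfolding fc_def by simp
  have cg: "(cmod (gc x))\<^sup>2 = (g x)\<^sup>2" for x unfolding gc_def by simp
  have M0: "0 \<le> M" using M[of 0] Gnn[of 0] A0 by auto
  have FGm: "(fc, gc) \<in> FG A G"
    unfolding FG_def
  proof (intro CollectI case_prodI conjI)
    show "set_borel_measurable lborel {0<..<A} fc"
      unfolding set_borel_measurable_def fc_def by measurable
    show "set_integrable lborel {0<..<A} (\<lambda>x. (cmod (fc x))\<^sup>2)"
      unfolding cf
    proof (rule si_Ioo[where B=1])
      fix x show "norm ((f x)\<^sup>2) \<le> 1" using fb[of x] by (simp add: abs_square_le_1)
    qed measurable
    show "has_weak_deriv A fc gc" using wd unfolding fc_def gc_def .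
    have "set_integrable lborel {0<..<A} (\<lambda>x. (g x)\<^sup>2 * x * G' x)"
    proof (rule si_Ioo[where B="(\<beta> * b)\<^sup>2 * A * M"])
      fix x :: real assume x: "x \<in> {0<..<A}"
      have "0 \<le> G' x" "G' x \<le> M" using x Gnn[of x] M[of x] by (auto simp: G'_def)
      moreover have "(g x)\<^sup>2 \<le> (\<beta> * b)\<^sup>2"
        using gb[of x] by (metis abs_ge_zero power2_abs power_mono)
      ultimately have "(g x)\<^sup>2 * x * G' x \<le> (\<beta> * b)\<^sup>2 * A * M"
        using x by (intro mult_mono) auto
      moreover have "0 \<le> (g x)\<^sup>2 * x * G' x" using x \<open>0 \<le> G' x\<close> by simp
      ultimately show "norm ((g x)\<^sup>2 * x * G' x) \<le> (\<beta> * b)\<^sup>2 * A * M" by simp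
    qed measurable
    moreover have "(\<lambda>x. indicator {0<..<A} x *\<^sub>R ((g x)\<^sup>2 * x * G' x)) = (\<lambda>x. indicator {0<..<A} x *\<^sub>R ((cmod (gc x))\<^sup>2 * x * G x))"
      by (auto simp: fun_eq_iff cg G'_def indicator_def)
    ultimately show "set_integrable lborel {0<..<A} (\<lambda>x. (cmod (gc x))\<^sup>2 * x * G x)"
      unfolding set_integrable_def by simp
  qed
  define S where "S = (LINT x:{0<..<A}|lborel. (cmod (fc x))\<^sup>2)"
  define N where "N = (LINT x:{0<..<A}|lborel. x * G x * (cmod (gc x))\<^sup>2 + \<beta>\<^sup>2 * x / G x * (cmod (fc x))\<^sup>2)"
  define J where "J = (LINT t:{0..A}|lborel. u t * (f t)\<^sup>2 * t)"
  define S' where "S' = (LINT t:{0..A}|lborel. (f t)\<^sup>2)"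
  have SS': "S = S'" unfolding S_def S'_def cf by (rule lint_Ioo_Icc) measurable
  have NJ: "N = 2 * \<beta>\<^sup>2 * J"
  proof -
    have "N = (LINT x:{0<..<A}|lborel. x * G' x * (g x)\<^sup>2 + \<beta>\<^sup>2 * x / G' x * (f x)\<^sup>2)"
      unfolding N_def by (rule set_lebesgue_integral_cong) (auto simp: cf cg G'_def)
    also have "\<dots> = (LINT x:{0<..<A}|lborel. 2 * \<beta>\<^sup>2 * (u x * (f x)\<^sup>2 * x))"
      unfolding set_lebesgue_integral_def
    proof (rule integral_cong_AE)
      show "AE x in lborel. indicator {0<..<A} x *\<^sub>R (x * G' x * (g x)\<^sup>2 + \<beta>\<^sup>2 * x / G' x * (f x)\<^sup>2)
          = indicator {0<..<A} x *\<^sub>R (2 * \<beta>\<^sup>2 * (u x * (f x)\<^sup>2 * x))"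
        using assms(5)
      proof (rule eventually_mono)
        fix x assume h: "x \<in> {0..A} \<longrightarrow> 4 * pi \<le> G x"
        show "indicator {0<..<A} x *\<^sub>R (x * G' x * (g x)\<^sup>2 + \<beta>\<^sup>2 * x / G' x * (f x)\<^sup>2)
          = indicator {0<..<A} x *\<^sub>R (2 * \<beta>\<^sup>2 * (u x * (f x)\<^sup>2 * x))"
        proof (cases "x \<in> {0<..<A}")
          case True
          then have G4: "4 * pi \<le> G x" and GG: "G' x = G x" using h by (auto simp: G'_def)
          then have Gp: "0 < G x" using pi_gt_zero by linarith
          have ux: "u x = 1 / G x" unfolding u_def using True G4 GG by simp
          have "x * G' x * (g x)\<^sup>2 + \<beta>\<^sup>2 * x / G' x * (f x)\<^sup>2 = 2 * \<beta>\<^sup>2 * (u x * (f x)\<^sup>2 * x)"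
            unfolding GG g_def ux using Gp by (simp add: field_simps power2_eq_square)
          then show ?thesis by simp
        qed simp
      qed
    qed measurable
    also have "\<dots> = 2 * \<beta>\<^sup>2 * (LINT x:{0<..<A}|lborel. u x * (f x)\<^sup>2 * x)"
      by (rule set_integral_mult_right)
    also have "\<dots> = 2 * \<beta>\<^sup>2 * J"
    proof -
      have "(\<lambda>x. u x * (f x)\<^sup>2 * x) \<in> borel_measurable lborel" by measurable
      from lint_Ioo_Icc[OF this, of A] show ?thesis unfolding J_def by simp
    qed
    finally show ?thesis .
  qed
  have Jnn: "0 \<le> J"
    unfolding J_def set_lebesgue_integral_def
    by (rule integral_nonneg_AE) (auto intro!: AE_I2 simp: indicator_def u0)
  have JS: "2 * \<beta> * J = S' - A * (f A)\<^sup>2"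
  proof -
    have I: "(LINT s:{0..A}|lborel. 1 * (LINT t:{0..s}|lborel. u t * (f t)\<^sup>2))
       + (LINT t:{0..A}|lborel. u t * (f t)\<^sup>2 * (LINT s:{0..t}|lborel. 1))
       = (LINT s:{0..A}|lborel. 1) * (LINT t:{0..A}|lborel. u t * (f t)\<^sup>2)"
    proof (rule ibp[where B="max 1 b"])
      fix s show "\<bar>u s * (f s)\<^sup>2\<bar> \<le> max 1 b"
      proof -
        have "u s * (f s)\<^sup>2 \<le> b * 1"
          using u0[of s] ub[of s] fb[of s] by (intro mult_mono) (auto simp: abs_square_le_1)
        then show ?thesis using u0[of s] by simp
      qed
    qed auto
    have one: "(LINT s:{0..t}|lborel. (1::real)) = t" if "0 \<le> t" for t
      using set_integral_const[of "{0..t}" lborel "1::real"] that by (simp add: emeasure_lborel_Icc_eq)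
    have i1: "set_integrable lborel {0..A} (\<lambda>s. (1::real))"
      by (rule si_Icc[where B=1]) auto
    have i2: "set_integrable lborel {0..A} (\<lambda>s. (f s)\<^sup>2)"
      by (rule si_Icc[where B=1]) (use fb in \<open>auto simp: abs_square_le_1\<close>)
    have a: "(LINT s:{0..A}|lborel. 1 * (LINT t:{0..s}|lborel. u t * (f t)\<^sup>2)) = (A - S') / (2 * \<beta>)"
    proof -
      have "(LINT s:{0..A}|lborel. 1 * (LINT t:{0..s}|lborel. u t * (f t)\<^sup>2)) = (LINT s:{0..A}|lborel. (1 - (f s)\<^sup>2) / (2 * \<beta>))"
        by (simp only: E2 mult_1)
      also have "\<dots> = (LINT s:{0..A}|lborel. 1 - (f s)\<^sup>2) / (2 * \<beta>)" by (rule set_integral_divide_zero)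
      also have "\<dots> = (A - S') / (2 * \<beta>)"
        unfolding set_integral_diff(2)[OF i1 i2] S'_def one[OF A0'] ..
      finally show ?thesis .
    qed
    have c: "(LINT t:{0..A}|lborel. u t * (f t)\<^sup>2 * (LINT s:{0..t}|lborel. 1)) = J"
      unfolding J_def by (rule set_lebesgue_integral_cong) (auto simp: one)
    from I[unfolded a c, unfolded one[OF A0'] E2]
    have "(A - S') / (2 * \<beta>) + J = A * ((1 - (f A)\<^sup>2) / (2 * \<beta>))" .
    then show ?thesis using bet by (simp add: field_simps)
  qed
  have fA: "0 < A * (f A)\<^sup>2" using A0 fpos[of A] by simp
  have Spos: "0 < S" using JS Jnn bet fA SS' by (smt (verit) mult_nonneg_nonneg)
  have NS: "N = \<beta> * (S - A * (f A)\<^sup>2)"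
  proof -
    have e: "S' = A * (f A)\<^sup>2 + 2 * \<beta> * J" using JS by linarith
    show ?thesis unfolding NJ SS' e by (simp add: power2_eq_square algebra_simps)
  qed
  define X where "X = {(LINT x:{0<..<A}|lborel. x * G x * (cmod (g x))\<^sup>2 + \<beta>\<^sup>2 * x / G x * (cmod (f x))\<^sup>2)
        / (LINT x:{0<..<A}|lborel. (cmod (f x))\<^sup>2)
      | f g. (f, g) \<in> FG A G \<and> (LINT x:{0<..<A}|lborel. (cmod (f x))\<^sup>2) \<noteq> 0}"
  have k: "kappa1 A G \<beta> = Inf X" unfolding kappa1_def X_def ..
  have mem: "N / S \<in> X"
    unfolding X_def N_def S_def using FGm Spos[unfolded S_def] by force
  have bdd: "bdd_below X"
  proof (rule bdd_belowI)
    fix y assume "y \<in> X"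
    then obtain f g where y: "y = (LINT x:{0<..<A}|lborel. x * G x * (cmod (g x))\<^sup>2 + \<beta>\<^sup>2 * x / G x * (cmod (f x))\<^sup>2)
        / (LINT x:{0<..<A}|lborel. (cmod (f x))\<^sup>2)" unfolding X_def by blast
    have "0 \<le> (LINT x:{0<..<A}|lborel. x * G x * (cmod (g x))\<^sup>2 + \<beta>\<^sup>2 * x / G x * (cmod (f x))\<^sup>2)"
      unfolding set_lebesgue_integral_def
      by (rule integral_nonneg_AE) (auto intro!: AE_I2 simp: indicator_def Gnn)
    moreover have "0 \<le> (LINT x:{0<..<A}|lborel. (cmod (f x))\<^sup>2)"
      unfolding set_lebesgue_integral_def
      by (rule integral_nonneg_AE) (auto intro!: AE_I2 simp: indicator_def)
    ultimately show "0 \<le> y" unfolding y by simp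
  qed
  have "kappa1 A G \<beta> \<le> N / S" unfolding k by (rule cInf_lower[OF mem bdd])
  also have "N / S < \<beta>"
  proof -
    have "N < \<beta> * S" unfolding NS using bet fA by simp
    then show ?thesis using Spos by (simp add: divide_less_eq)
  qed
  finally show ?thesis .
qed

end
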